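(* Let $X$ be an (absolutely) continuous nonnegative integrable random variable, let $H$ be a horizon with mean $\mu:=\mathbb{E}H$, and let $p>0$ be such that $\mathbb{P}(X\ge p)=1/\mu$. Then \[\mathbb{E}M_H\le\mathbb{E}(X\mid X\ge p),\] where $M_H:=\max_{i\le H}X_i$ and $X_1,X_2,\dots$ are i.i.d. copies of $X$ independent of $H$.
   Context: A horizon is a random variable supported on a subset of $\mathbb{N}=\{1,2,\dots\}$ with finite expectation. *)

theory Defs
  imports "HOL-Probability.Probability"
begin

definition cond_exp_event :: "'a measure \<Rightarrow> ('a \<Rightarrow> real) \<Rightarrow> 'a set \<Rightarrow> real" where
  "cond_exp_event M X A = (\<integral>\<omega>. X \<omega> * indicator A \<omega> \<partial>M) / measure M A"

definition horizon :: "'a measure \<Rightarrow> ('a \<Rightarrow> nat) \<Rightarrow> bool" where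
  "horizon M H \<longleftrightarrow> H \<in> measurable M (count_space UNIV)
      \<and> (AE \<omega> in M. H \<omega> \<ge> 1)
      \<and> integrable M (\<lambda>\<omega>. real (H \<omega>))"

end

theory Submission
  imports Defs
begin

lemma max_le_sum_pos:
  fixes f :: "nat \<Rightarrow> real"
  assumes "n \<ge> 1"
  shows "Max (f ` {1..n}) \<le> p + (\<Sum>i\<in>{1..n}. max (f i - p) 0)"
proof -
  have ne: "f ` {1..n} \<noteq> {}" using assms by auto
  obtain k where k: "k \<in> {1..n}" "Max (f ` {1..n}) = f k"
    using Max_in[OF _ ne] by auto
  have "max (f k - p) 0 \<le> (\<Sum>i\<in>{1..n}. max (f i - p) 0)"
    by (rule member_le_sum) (use k in auto)
  then show ?thesis using k by linarith
qed

lemma sum_as_suminf: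
  fixes g :: "nat \<Rightarrow> ennreal"
  shows "(\<Sum>i\<in>{1..n}. g i) = (\<Sum>j. g (Suc j) * indicator {x::real. real (Suc j) \<le> x} (real n))"
proof -
  have "(\<Sum>j. g (Suc j) * indicator {x::real. real (Suc j) \<le> x} (real n))
      = (\<Sum>j\<in>{..<n}. g (Suc j) * indicator {x::real. real (Suc j) \<le> x} (real n))"
    by (rule suminf_finite) (auto simp: indicator_def)
  also have "\<dots> = (\<Sum>j\<in>{..<n}. g (Suc j))"
    by (rule sum.cong) (auto simp: indicator_def)
  also have "\<dots> = (\<Sum>i\<in>{1..n}. g i)"
    using sum.atLeast1_atMost_eq[of g n] by simp
  finally show ?thesis by simp
qed

theorem lemma3:
  fixes M :: "'a measure" and X :: "'a \<Rightarrow> real" and Xs :: "nat \<Rightarrow> 'a \<Rightarrow> real"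
    and H :: "'a \<Rightarrow> nat" and p :: real
  assumes "prob_space M"
    and X_rv: "X \<in> borel_measurable M"
    and X_ac: "absolutely_continuous lborel (distr M borel X)"
    and X_nonneg: "AE \<omega> in M. X \<omega> \<ge> 0"
    and X_int: "integrable M X"
    and H_hor: "horizon M H"
    and Xs_rv: "\<And>i. Xs i \<in> borel_measurable M"
    and Xs_ident: "\<And>i. distr M borel (Xs i) = distr M borel X"
    and indep: "prob_space.indep_vars M (\<lambda>_. borel)
                  (\<lambda>j \<omega>. case j of None \<Rightarrow> real (H \<omega>) | Some i \<Rightarrow> Xs i \<omega>) UNIV"
    and p_pos: "p > 0"
    and p_prob: "measure M {\<omega> \<in> space M. X \<omega> \<ge> p} = 1 / (\<integral>\<omega>. real (H \<omega>) \<partial>M)"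
  shows "(\<integral>\<omega>. Max ((\<lambda>i. Xs i \<omega>) ` {1..H \<omega>}) \<partial>M)
           \<le> cond_exp_event M X {\<omega> \<in> space M. X \<omega> \<ge> p}"
proof -
  interpret prob_space M by fact
  have H_meas[measurable]: "H \<in> measurable M (count_space UNIV)"
    and H_ge: "AE \<omega> in M. H \<omega> \<ge> 1" and H_int: "integrable M (\<lambda>\<omega>. real (H \<omega>))"
    using H_hor by (auto simp: horizon_def)
  note [measurable] = Xs_rv X_rv
  define mu where "mu = (\<integral>\<omega>. real (H \<omega>) \<partial>M)"
  define e where "e = (\<integral>\<omega>. max (X \<omega> - p) 0 \<partial>M)"
  have Y0_int: "integrable M (\<lambda>\<omega>. max (X \<omega> - p) 0)"
    using X_int by (intro integrable_max integrable_diff) auto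
  have e_nn: "e \<ge> 0" unfolding e_def by (rule integral_nonneg_AE) auto
  have mu_ge: "mu \<ge> 1"
  proof -
    have "(\<integral>\<omega>. 1 \<partial>M) \<le> mu" unfolding mu_def
      by (rule integral_mono_AE) (use H_int H_ge in auto)
    then show ?thesis by (simp add: prob_space)
  qed
  have ennY0: "(\<integral>\<^sup>+\<omega>. ennreal (max (X \<omega> - p) 0) \<partial>M) = ennreal e"
    unfolding e_def by (rule nn_integral_eq_integral[OF Y0_int]) auto
  have ennH: "(\<integral>\<^sup>+\<omega>. ennreal (real (H \<omega>)) \<partial>M) = ennreal mu"
    unfolding mu_def by (rule nn_integral_eq_integral[OF H_int]) auto
  have ennYi: "(\<integral>\<^sup>+\<omega>. ennreal (max (Xs i \<omega> - p) 0) \<partial>M) = ennreal e" for i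
  proof -
    have "(\<integral>\<^sup>+\<omega>. ennreal (max (Xs i \<omega> - p) 0) \<partial>M)
        = (\<integral>\<^sup>+x. ennreal (max (x - p) 0) \<partial>distr M borel (Xs i))"
      by (subst nn_integral_distr) auto
    also have "\<dots> = (\<integral>\<^sup>+x. ennreal (max (x - p) 0) \<partial>distr M borel X)"
      by (simp add: Xs_ident)
    also have "\<dots> = (\<integral>\<^sup>+\<omega>. ennreal (max (X \<omega> - p) 0) \<partial>M)"
      by (subst nn_integral_distr) auto
    finally show ?thesis using ennY0 by simp
  qed
  define Ind where "Ind j \<omega> = (indicator {x::real. real (Suc j) \<le> x} (real (H \<omega>)) :: ennreal)" for j \<omega>
  have Ind_meas[measurable]: "Ind j \<in> borel_measurable M" for j
    unfolding Ind_def by measurable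
  have indep_prod: "(\<integral>\<^sup>+\<omega>. ennreal (max (Xs (Suc j) \<omega> - p) 0) * Ind j \<omega> \<partial>M)
      = ennreal e * (\<integral>\<^sup>+\<omega>. Ind j \<omega> \<partial>M)" for j
  proof -
    define g where "g k x = (case k of None \<Rightarrow> indicator {x::real. real (Suc j) \<le> x} x
                                   | Some i \<Rightarrow> ennreal (max (x - p) 0))" for k :: "nat option" and x :: real
    have gm: "g k \<in> borel_measurable borel" for k
      unfolding g_def by (cases k) auto
    have ind2: "indep_vars (\<lambda>_. borel) (\<lambda>k \<omega>. g k (case k of None \<Rightarrow> real (H \<omega>) | Some i \<Rightarrow> Xs i \<omega>))
        {None, Some (Suc j)}"
      by (rule indep_vars_compose2[OF indep_vars_subset[OF indep]]) (auto intro: gm)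
    have "(\<integral>\<^sup>+\<omega>. (\<Prod>k\<in>{None, Some (Suc j)}. g k (case k of None \<Rightarrow> real (H \<omega>) | Some i \<Rightarrow> Xs i \<omega>)) \<partial>M)
        = (\<Prod>k\<in>{None, Some (Suc j)}. \<integral>\<^sup>+\<omega>. g k (case k of None \<Rightarrow> real (H \<omega>) | Some i \<Rightarrow> Xs i \<omega>) \<partial>M)"
      by (rule indep_vars_nn_integral[OF _ ind2]) auto
    then show ?thesis
      using ennYi[of "Suc j"] by (simp add: g_def Ind_def mult.commute)
  qed
  have sumInd: "(\<Sum>j. (\<integral>\<^sup>+\<omega>. Ind j \<omega> \<partial>M)) = ennreal mu"
  proof -
    have "(\<Sum>j. (\<integral>\<^sup>+\<omega>. Ind j \<omega> \<partial>M)) = (\<integral>\<^sup>+\<omega>. (\<Sum>j. Ind j \<omega>) \<partial>M)"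
      by (rule nn_integral_suminf[symmetric]) auto
    also have "\<dots> = (\<integral>\<^sup>+\<omega>. ennreal (real (H \<omega>)) \<partial>M)"
    proof (rule nn_integral_cong)
      fix \<omega>
      have "(\<Sum>j. Ind j \<omega>) = (\<Sum>i\<in>{1..H \<omega>}. (1::ennreal))"
        unfolding Ind_def using sum_as_suminf[of "\<lambda>_. 1" "H \<omega>"] by simp
      then show "(\<Sum>j. Ind j \<omega>) = ennreal (real (H \<omega>))"
        by (simp add: ennreal_of_nat_eq_real_of_nat)
    qed
    finally show ?thesis using ennH by simp
  qed
  define S where "S \<omega> = (\<Sum>i\<in>{1..H \<omega>}. max (Xs i \<omega> - p) 0)" for \<omega>
  have S_nn: "S \<omega> \<ge> 0" for \<omega> unfolding S_def by (rule sum_nonneg) auto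
  have ennS: "(\<integral>\<^sup>+\<omega>. ennreal (S \<omega>) \<partial>M) = ennreal e * ennreal mu"
  proof -
    have "(\<integral>\<^sup>+\<omega>. ennreal (S \<omega>) \<partial>M)
        = (\<integral>\<^sup>+\<omega>. (\<Sum>j. ennreal (max (Xs (Suc j) \<omega> - p) 0) * Ind j \<omega>) \<partial>M)"
    proof (rule nn_integral_cong)
      fix \<omega>
      have "ennreal (S \<omega>) = (\<Sum>i\<in>{1..H \<omega>}. ennreal (max (Xs i \<omega> - p) 0))"
        unfolding S_def by (subst sum_ennreal) auto
      then show "ennreal (S \<omega>) = (\<Sum>j. ennreal (max (Xs (Suc j) \<omega> - p) 0) * Ind j \<omega>)"
        unfolding Ind_def using sum_as_suminf[of "\<lambda>i. ennreal (max (Xs i \<omega> - p) 0)" "H \<omega>"] by simp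
    qed
    also have "\<dots> = (\<Sum>j. \<integral>\<^sup>+\<omega>. ennreal (max (Xs (Suc j) \<omega> - p) 0) * Ind j \<omega> \<partial>M)"
      by (rule nn_integral_suminf) auto
    also have "\<dots> = (\<Sum>j. ennreal e * (\<integral>\<^sup>+\<omega>. Ind j \<omega> \<partial>M))"
      using indep_prod by simp
    also have "\<dots> = ennreal e * ennreal mu"
      using sumInd by simp
    finally show ?thesis .
  qed
  define F where "F \<omega> = Max ((\<lambda>i. Xs i \<omega>) ` {1..H \<omega>})" for \<omega>
  have ennF: "(\<integral>\<^sup>+\<omega>. ennreal (F \<omega>) \<partial>M) \<le> ennreal (p + e * mu)"
  proof -
    have "(\<integral>\<^sup>+\<omega>. ennreal (F \<omega>) \<partial>M) \<le> (\<integral>\<^sup>+\<omega>. ennreal p + ennreal (S \<omega>) \<partial>M)"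
    proof (rule nn_integral_mono_AE)
      show "AE \<omega> in M. ennreal (F \<omega>) \<le> ennreal p + ennreal (S \<omega>)"
        using H_ge
      proof eventually_elim
        case (elim \<omega>)
        then have "F \<omega> \<le> p + S \<omega>" unfolding F_def S_def by (rule max_le_sum_pos)
        then have "ennreal (F \<omega>) \<le> ennreal (p + S \<omega>)" by (rule ennreal_leI)
        moreover have "ennreal (p + S \<omega>) = ennreal p + ennreal (S \<omega>)"
          using p_pos S_nn[of \<omega>] by (intro ennreal_plus) auto
        ultimately show ?case by simp
      qed
    qed
    also have "\<dots> = ennreal p + ennreal e * ennreal mu"
    proof -
      have Sm: "S \<in> borel_measurable M"
        unfolding S_def
        by (rule measurable_compose_countable[where f="\<lambda>n \<omega>. \<Sum>i\<in>{1..n}. max (Xs i \<omega> - p) 0" and g=H]) auto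
      show ?thesis
        by (subst nn_integral_add) (use Sm in \<open>auto simp: ennS emeasure_space_1\<close>)
    qed
    also have "\<dots> = ennreal (p + e * mu)"
      using p_pos e_nn mu_ge ennreal_plus[of p "e * mu"] ennreal_mult[of e mu] by simp
    finally show ?thesis .
  qed
  have LHS: "(\<integral>\<omega>. F \<omega> \<partial>M) \<le> p + e * mu"
  proof (cases "integrable M F")
    case True
    have "(\<integral>\<omega>. F \<omega> \<partial>M) \<le> enn2real (\<integral>\<^sup>+\<omega>. ennreal (F \<omega>) \<partial>M)"
      by (simp add: real_lebesgue_integral_def[OF True])
    also have "\<dots> \<le> p + e * mu"
    proof -
      have nn: "0 \<le> p + e * mu" using p_pos e_nn mu_ge by simp
      have "enn2real (\<integral>\<^sup>+\<omega>. ennreal (F \<omega>) \<partial>M) \<le> enn2real (ennreal (p + e * mu))"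
        by (rule enn2real_mono[OF ennF]) simp
      then show ?thesis using nn by simp
    qed
    finally show ?thesis .
  next
    case False
    then show ?thesis using p_pos e_nn mu_ge by (simp add: not_integrable_integral_eq)
  qed
  define A where "A = {\<omega> \<in> space M. X \<omega> \<ge> p}"
  have A_meas[measurable]: "A \<in> sets M" unfolding A_def by measurable
  have "(\<integral>\<omega>. X \<omega> * indicator A \<omega> \<partial>M) = (\<integral>\<omega>. max (X \<omega> - p) 0 + p * indicator A \<omega> \<partial>M)"
    by (intro Bochner_Integration.integral_cong refl) (auto simp: A_def indicator_def)
  also have "\<dots> = e + p * measure M A"
    unfolding e_def by (subst Bochner_Integration.integral_add) (auto simp: Y0_int integrable_real_indicator[OF A_meas] less_top[symmetric])
  finally have num: "(\<integral>\<omega>. X \<omega> * indicator A \<omega> \<partial>M) = e + p * measure M A" .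
  have mA: "measure M A = 1 / mu" using p_prob unfolding A_def mu_def .
  have RHS: "cond_exp_event M X A = p + e * mu"
    unfolding cond_exp_event_def num mA using mu_ge by (simp add: field_simps)
  show ?thesis using LHS RHS unfolding F_def A_def by simp
qed

end
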